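(* In the SLAR setting, let $(\delta^*,w^* )$ be any Nash equilibrium of the SLAR game. Then for every non-robust feature $x_i$ we have $w_i^*=0$.
   Context: SLAR setting: $(x,y)$ is drawn from a distribution $\mathcal D$ on $\mathbb R^d\times\{-1,+1\}$, $x=(x_1,\dots,x_d)$ with finite second moments, such that (A1) for each $i$ there is a constant $\mu_i$ with $\mathbb E[x_i\mid y]=y\mu_i$ for $y\in\{-1,1\}$, and (A2) the coordinates $x_1,\dots,x_d$ are mutually independent conditionally on $y$. Fix $\lambda>0$ and a perturbation budget $\varepsilon>0$; $\mathcal B(\varepsilon)=\{a\in\mathbb R^d:\|a\|_\infty\le\varepsilon\}$. A perturbation function is a measurable map $\delta$ assigning to each $(x,y)$ a vector $\delta(x,y)\in\mathcal B(\varepsilon)$. For a perturbation function $\delta$ and $w\in\mathbb R^d$ let $U(\delta,w)=\mathbb E_{(x,y)\sim\mathcal D}[\max(0,1-yw^\top(x+\delta(x,y)))]+\frac{\lambda}{2}\|w\|_2^2$. A feature $x_i$ is non-robust if $|\mu_i|\le\varepsilon$, and robust otherwise. SLAR game: the adversary chooses a perturbation function $\delta$, the defender chooses $w\in\mathbb R^d$; the adversary's payoff is $U(\delta,w)$ and the defender's is $-U(\delta,w)$. A pair $(\delta^*,w^* )$ is a (pure) Nash equilibrium if $\sup_\delta U(\delta,w^* )\le U(\delta^*,w^* )\le\inf_{w\in\mathbb R^d}U(\delta^*,w)$, the supremum over all perturbation functions. *)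

theory Defs
  imports "HOL-Probability.Probability"
begin

definition slar_dist :: "((real^'d) \<times> real) measure \<Rightarrow> real^'d \<Rightarrow> bool" where
  "slar_dist D \<mu> \<longleftrightarrow>
     prob_space D \<and> sets D = sets borel \<and>
     (AE p in D. snd p \<in> {-1, 1}) \<and>
     (\<forall>i. integrable D (\<lambda>p. (fst p $ i)\<^sup>2)) \<and>
     \<comment> \<open>(A1): E[x_i | y] = y mu_i, written via E[x_i 1{y=y0}] = y0 mu_i P(y=y0)\<close>
     (\<forall>i. \<forall>y0\<in>{-1, 1::real}.
        integral\<^sup>L D (\<lambda>p. fst p $ i * indicator {q. snd q = y0} p)
          = y0 * \<mu> $ i * measure D {p \<in> space D. snd p = y0}) \<and>
     \<comment> \<open>(A2): coordinates independent conditionally on y\<close>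
     (\<forall>y0\<in>{-1, 1::real}. measure D {p \<in> space D. snd p = y0} > 0 \<longrightarrow>
        prob_space.indep_vars (uniform_measure D {p \<in> space D. snd p = y0})
          (\<lambda>_. borel) (\<lambda>i p. fst p $ i) UNIV)"

definition perturbation :: "((real^'d) \<times> real) measure \<Rightarrow> real \<Rightarrow> ((real^'d) \<times> real \<Rightarrow> real^'d) \<Rightarrow> bool" where
  "perturbation D \<epsilon> \<delta> \<longleftrightarrow>
     \<delta> \<in> borel_measurable D \<and> (\<forall>p. \<forall>i. \<bar>\<delta> p $ i\<bar> \<le> \<epsilon>)"

definition slar_U :: "((real^'d) \<times> real) measure \<Rightarrow> real \<Rightarrow> ((real^'d) \<times> real \<Rightarrow> real^'d) \<Rightarrow> real^'d \<Rightarrow> real" where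
  "slar_U D lam \<delta> w =
     integral\<^sup>L D (\<lambda>p. max 0 (1 - snd p * (w \<bullet> (fst p + \<delta> p)))) + lam / 2 * (norm w)\<^sup>2"

definition slar_nash :: "((real^'d) \<times> real) measure \<Rightarrow> real \<Rightarrow> real \<Rightarrow> ((real^'d) \<times> real \<Rightarrow> real^'d) \<Rightarrow> real^'d \<Rightarrow> bool" where
  "slar_nash D lam \<epsilon> \<delta>s ws \<longleftrightarrow>
     perturbation D \<epsilon> \<delta>s \<and>
     (\<forall>\<delta>. perturbation D \<epsilon> \<delta> \<longrightarrow> slar_U D lam \<delta> ws \<le> slar_U D lam \<delta>s ws) \<and>
     (\<forall>w. slar_U D lam \<delta>s ws \<le> slar_U D lam \<delta>s w)"

end

theory Submission
  imports Defs
begin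

lemma meas_D:
  assumes "sets D = sets (borel :: ((real^'d) \<times> real) measure)"
    and "continuous_on UNIV (f :: (real^'d) \<times> real \<Rightarrow> 'b::topological_space)"
  shows "f \<in> borel_measurable D"
proof -
  have "f \<in> borel_measurable borel" by (rule borel_measurable_continuous_onI[OF assms(2)])
  then show ?thesis by (subst measurable_cong_sets[OF assms(1) refl])
qed

lemma vec_nth_meas[measurable]: "(\<lambda>v::real^'d. v $ j) \<in> borel_measurable borel"
  by (rule borel_measurable_continuous_onI, rule continuous_on_component[OF continuous_on_id])

lemma slar_basic:
  assumes "slar_dist D \<mu>"
  shows "prob_space D" "sets D = sets borel" "AE p in D. snd p = 1 \<or> snd p = -1"
    "fst \<in> borel_measurable D" "snd \<in> borel_measurable D"
    "integrable D (\<lambda>p. fst p $ i)"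
proof -
  have all: "prob_space D \<and> sets D = sets borel \<and> (AE p in D. snd p \<in> {-1,1})"
    using assms unfolding slar_dist_def by blast
  show P: "prob_space D" using all by blast
  show S: "sets D = sets borel" using all by blast
  have "AE p in D. snd p \<in> {-1,1}" using all by blast
  then show "AE p in D. snd p = 1 \<or> snd p = -1" by eventually_elim auto
  show "fst \<in> borel_measurable D" "snd \<in> borel_measurable D"
    by (rule meas_D[OF S], rule continuous_on_fst[OF continuous_on_id])
       (rule meas_D[OF S], rule continuous_on_snd[OF continuous_on_id])
  interpret prob_space D by fact
  show "integrable D (\<lambda>p. fst p $ i)"
  proof (rule square_integrable_imp_integrable)
    show "(\<lambda>p. fst p $ i) \<in> borel_measurable D" by (rule meas_D[OF S], rule continuous_on_component[OF continuous_on_fst[OF continuous_on_id]])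
    show "integrable D (\<lambda>p. (fst p $ i)\<^sup>2)" using assms by (simp add: slar_dist_def)
  qed
qed

lemma hinge_int:
  fixes D :: "((real^'d) \<times> real) measure" and w :: "real^'d"
  assumes "slar_dist D \<mu>" "perturbation D \<epsilon> \<delta>" "\<epsilon> > 0"
  shows "integrable D (\<lambda>p. max 0 (1 - snd p * (w \<bullet> (fst p + \<delta> p))))"
proof -
  note B = slar_basic[OF assms(1)]
  have [measurable]: "fst \<in> borel_measurable D" "snd \<in> borel_measurable D" "\<delta> \<in> borel_measurable D"
    using B assms(2) by (auto simp: perturbation_def)
  have bd: "\<bar>\<delta> p $ j\<bar> \<le> \<epsilon>" for p j using assms(2) by (cases p) (auto simp: perturbation_def)
  let ?B = "\<lambda>p. 1 + (\<Sum>j\<in>UNIV. \<bar>w $ j\<bar> * (\<bar>fst p $ j\<bar> + \<epsilon>))"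
  show ?thesis
  proof (rule Bochner_Integration.integrable_bound[of D ?B])
    show "integrable D ?B"
    proof -
      interpret prob_space D using B(1) .
      have a: "integrable D (\<lambda>p. \<bar>fst p $ j\<bar> + \<epsilon>)" for j
        by (rule Bochner_Integration.integrable_add[OF integrable_abs[OF B(6)] integrable_const])
      have b: "integrable D (\<lambda>p. (\<Sum>j\<in>UNIV. \<bar>w $ j\<bar> * (\<bar>fst p $ j\<bar> + \<epsilon>)))"
        by (rule Bochner_Integration.integrable_sum, rule Bochner_Integration.integrable_mult_right, rule a)
      show ?thesis
        by (rule Bochner_Integration.integrable_add[OF integrable_const b])
    qed
    show "(\<lambda>p. max 0 (1 - snd p * (w \<bullet> (fst p + \<delta> p)))) \<in> borel_measurable D"
      by measurable
    show "AE p in D. norm (max 0 (1 - snd p * (w \<bullet> (fst p + \<delta> p)))) \<le> norm (?B p)"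
      using B(3)
    proof (rule AE_mp, intro AE_I2 impI)
      fix p :: "(real^'d) \<times> real" assume y: "snd p = 1 \<or> snd p = -1"
      have "\<bar>w \<bullet> (fst p + \<delta> p)\<bar> = \<bar>\<Sum>j\<in>UNIV. w $ j * (fst p $ j + \<delta> p $ j)\<bar>"
        by (simp add: inner_vec_def)
      also have "\<dots> \<le> (\<Sum>j\<in>UNIV. \<bar>w $ j * (fst p $ j + \<delta> p $ j)\<bar>)" by (rule sum_abs)
      also have "\<dots> \<le> (\<Sum>j\<in>UNIV. \<bar>w $ j\<bar> * (\<bar>fst p $ j\<bar> + \<epsilon>))"
        apply (rule sum_mono) unfolding abs_mult
        apply (rule mult_left_mono) using bd[of p] by (auto intro: order_trans[OF abs_triangle_ineq])
      finally have "\<bar>w \<bullet> (fst p + \<delta> p)\<bar> \<le> (\<Sum>j\<in>UNIV. \<bar>w $ j\<bar> * (\<bar>fst p $ j\<bar> + \<epsilon>))" .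
      moreover have "0 \<le> (\<Sum>j\<in>UNIV. \<bar>w $ j\<bar> * (\<bar>fst p $ j\<bar> + \<epsilon>))"
        using assms(3) by (intro sum_nonneg) auto
      ultimately show "norm (max 0 (1 - snd p * (w \<bullet> (fst p + \<delta> p)))) \<le> norm (?B p)"
        using y by auto
    qed
  qed
qed

lemma unif_int:
  fixes f :: "'a \<Rightarrow> real"
  assumes P: "prob_space D" and S: "S \<in> sets D" and pos: "measure D S > 0" and f: "integrable D f"
  shows "integrable (uniform_measure D S) f"
    "integral\<^sup>L (uniform_measure D S) f = integral\<^sup>L D (\<lambda>x. f x * indicator S x) / measure D S"
proof -
  interpret prob_space D by fact
  have [measurable]: "f \<in> borel_measurable D" using f by auto
  have [measurable]: "S \<in> sets D" by fact
  have eq: "uniform_measure D S = density D (\<lambda>x. ennreal (indicator S x / measure D S))"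
    unfolding uniform_measure_def
    by (intro arg_cong[where f="density D"] ext)
       (simp add: emeasure_eq_measure divide_ennreal[symmetric] pos ennreal_indicator)
  have nn: "AE x in D. 0 \<le> indicator S x / measure D S" using pos by auto
  have "integrable D (\<lambda>x. (indicator S x / measure D S) *\<^sub>R f x)"
  proof -
    have "integrable D (\<lambda>x. indicator S x *\<^sub>R f x)" by (rule integrable_mult_indicator) (use f in auto)
    then have "integrable D (\<lambda>x. (1 / measure D S) *\<^sub>R (indicator S x *\<^sub>R f x))" by (rule integrable_scaleR_right)
    then show ?thesis by simp
  qed
  then show "integrable (uniform_measure D S) f"
    unfolding eq by (subst integrable_density) (auto simp: nn)
  show "integral\<^sup>L (uniform_measure D S) f = integral\<^sup>L D (\<lambda>x. f x * indicator S x) / measure D S"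
    unfolding eq by (subst integral_density) (auto simp: nn mult.commute)
qed

lemma key_y0:
  fixes D :: "((real^'d) \<times> real) measure" and G :: "('d \<Rightarrow> real) \<Rightarrow> real"
  assumes sd: "slar_dist D \<mu>" and y0: "y0 \<in> {-1, 1::real}"
    and Gm: "G \<in> borel_measurable (PiM (UNIV - {i}) (\<lambda>_. borel))" and Gb: "\<And>z. \<bar>G z\<bar> \<le> 1"
  shows "integrable D (\<lambda>p. G (restrict (\<lambda>j. fst p $ j) (UNIV - {i})) * (\<mu>$i - y0 * fst p $ i)
            * indicator {q. snd q = y0} p) \<and> integral\<^sup>L D (\<lambda>p. G (restrict (\<lambda>j. fst p $ j) (UNIV - {i})) * (\<mu>$i - y0 * fst p $ i)
            * indicator {q. snd q = y0} p) = 0"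
proof -
  note B = slar_basic[OF sd]
  interpret prob_space D by (rule B(1))
  have sp: "space D = UNIV" using B(2) by (metis sets_eq_imp_space_eq space_borel)
  have [measurable]: "fst \<in> borel_measurable D" "snd \<in> borel_measurable D" using B by auto
  define S where "S = {q::(real^'d)\<times>real. snd q = y0}"
  have "{q \<in> space D. snd q = y0} \<in> sets D" by measurable
  then have Sm[measurable]: "S \<in> sets D" using sp by (simp add: S_def)
  define XA where "XA = (\<lambda>p::(real^'d)\<times>real. restrict (\<lambda>j. fst p $ j) (UNIV - {i}))"
  have comp[measurable]: "(\<lambda>p. fst p $ j) \<in> borel_measurable D" for j by measurable
  have XAm[measurable]: "XA \<in> measurable D (PiM (UNIV-{i}) (\<lambda>_. borel))"
    unfolding XA_def by (rule measurable_restrict) simp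
  have GXm[measurable]: "(\<lambda>p. G (XA p)) \<in> borel_measurable D"
    using measurable_compose[OF XAm Gm] by (simp add: comp_def)
  define H where "H = (\<lambda>p. G (XA p) * (\<mu>$i - y0 * fst p $ i))"
  have Hm[measurable]: "H \<in> borel_measurable D" unfolding H_def by measurable
  have y0a: "\<bar>y0\<bar> = 1" "y0 * y0 = 1" using y0 by auto
  have Hint: "integrable D H"
  proof (rule Bochner_Integration.integrable_bound[of D "\<lambda>p. \<bar>\<mu>$i\<bar> + \<bar>fst p $ i\<bar>"])
    show "integrable D (\<lambda>p. \<bar>\<mu>$i\<bar> + \<bar>fst p $ i\<bar>)"
      by (rule Bochner_Integration.integrable_add[OF integrable_const integrable_abs[OF B(6)]])
    show "AE x in D. norm (H x) \<le> norm (\<bar>\<mu>$i\<bar> + \<bar>fst x $ i\<bar>)"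
    proof (intro AE_I2)
      fix x :: "(real^'d)\<times>real"
      have "norm (H x) = \<bar>G (XA x)\<bar> * \<bar>\<mu>$i - y0 * fst x $ i\<bar>" by (simp add: H_def abs_mult)
      also have "\<dots> \<le> 1 * \<bar>\<mu>$i - y0 * fst x $ i\<bar>" by (rule mult_right_mono[OF Gb]) simp
      also have "\<dots> \<le> \<bar>\<mu>$i\<bar> + \<bar>fst x $ i\<bar>" using y0a by (simp add: abs_mult order_trans[OF abs_triangle_ineq4])
      finally show "norm (H x) \<le> norm (\<bar>\<mu>$i\<bar> + \<bar>fst x $ i\<bar>)" by simp
    qed
  qed fact
  have GXint: "integrable D (\<lambda>p. G (XA p))"
    by (rule Bochner_Integration.integrable_bound[of D "\<lambda>p. 1::real"]) (auto intro!: AE_I2 simp: Gb)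
  have INT: "integrable D (\<lambda>p. G (restrict (\<lambda>j. fst p $ j) (UNIV - {i})) * (\<mu>$i - y0 * fst p $ i)
            * indicator {q. snd q = y0} p)"
    using integrable_real_mult_indicator[OF Sm Hint] unfolding H_def XA_def S_def .
  have "integral\<^sup>L D (\<lambda>p. G (restrict (\<lambda>j. fst p $ j) (UNIV - {i})) * (\<mu>$i - y0 * fst p $ i)
            * indicator {q. snd q = y0} p) = 0"
  proof (cases "measure D S = 0")
    case True
    then have "S \<in> null_sets D" by (simp add: null_sets_def emeasure_eq_measure)
    then have "AE p in D. p \<notin> S" by (rule AE_not_in)
    then have "AE p in D. H p * indicator S p = 0" by eventually_elim simp
    then show ?thesis unfolding H_def XA_def S_def by (rule integral_eq_zero_AE)
  next
    case False
    then have pos: "measure D S > 0" using measure_nonneg[of D S] by linarith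
    define M where "M = uniform_measure D S"
    have "prob_space M" unfolding M_def
      by (rule prob_space_uniform_measure) (use pos in \<open>auto simp: emeasure_eq_measure\<close>)
    interpret Mp: prob_space M by fact
    have "{p \<in> space D. snd p = y0} = S" using sp by (auto simp: S_def)
    then have ind: "Mp.indep_vars (\<lambda>_. borel) (\<lambda>i p. fst p $ i) UNIV"
      using sd y0 pos unfolding slar_dist_def M_def by auto
    have ind1: "Mp.indep_var (PiM (UNIV-{i}) (\<lambda>_. borel)) XA (PiM {i} (\<lambda>_. borel)) (\<lambda>p. restrict (\<lambda>j. fst p $ j) {i})"
      unfolding XA_def by (rule Mp.indep_var_restrict[OF ind]) auto
    have ind2: "Mp.indep_var borel (G \<circ> XA) borel ((\<lambda>f. f i) \<circ> (\<lambda>p. restrict (\<lambda>j. fst p $ j) {i}))"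
      by (rule Mp.indep_var_compose[OF ind1 Gm]) simp
    have e1: "(G \<circ> XA) = (\<lambda>p. G (XA p))" "((\<lambda>f. f i) \<circ> (\<lambda>p. restrict (\<lambda>j. fst p $ j) {i})) = (\<lambda>p. fst p $ i)"
      by (auto simp: comp_def)
    have ind3: "Mp.indep_var borel (\<lambda>p. G (XA p)) borel (\<lambda>p. fst p $ i)" using ind2 unfolding e1 .
    note UI = unif_int[OF B(1) Sm pos]
    have iG: "integrable M (\<lambda>p. G (XA p))" unfolding M_def by (rule UI(1)[OF GXint])
    have iX: "integrable M (\<lambda>p. fst p $ i)" unfolding M_def by (rule UI(1)[OF B(6)])
    have prodint: "integral\<^sup>L M (\<lambda>p. G (XA p) * fst p $ i) = integral\<^sup>L M (\<lambda>p. G (XA p)) * integral\<^sup>L M (\<lambda>p. fst p $ i)"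
      and prodi: "integrable M (\<lambda>p. G (XA p) * fst p $ i)"
      using Mp.indep_var_lebesgue_integral[OF ind3 iG iX] Mp.indep_var_integrable[OF ind3 iG iX] by auto
    have A1: "integral\<^sup>L D (\<lambda>p. fst p $ i * indicator S p) = y0 * \<mu> $ i * measure D S"
      using sd y0 \<open>{p \<in> space D. snd p = y0} = S\<close> unfolding slar_dist_def S_def by auto
    have EX: "integral\<^sup>L M (\<lambda>p. fst p $ i) = y0 * \<mu> $ i"
      unfolding M_def UI(2)[OF B(6)] A1 using pos by simp
    have "integral\<^sup>L M H = integral\<^sup>L M (\<lambda>p. \<mu>$i * G (XA p) - y0 * (G (XA p) * fst p $ i))"
      unfolding H_def by (rule Bochner_Integration.integral_cong) (auto simp: algebra_simps)
    also have "\<dots> = \<mu>$i * integral\<^sup>L M (\<lambda>p. G (XA p)) - y0 * integral\<^sup>L M (\<lambda>p. G (XA p) * fst p $ i)"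
      using iG prodi by simp
    also have "\<dots> = 0" unfolding prodint EX using y0a by (simp add: algebra_simps)
    finally have "integral\<^sup>L M H = 0" .
    then have "integral\<^sup>L D (\<lambda>x. H x * indicator S x) = 0"
      unfolding M_def UI(2)[OF Hint] using pos by simp
    then show ?thesis unfolding H_def XA_def S_def .
  qed
  with INT show ?thesis by blast
qed

lemma restr_sum: "(\<Sum>j\<in>UNIV-{i}. ws$j * restrict f (UNIV-{i}) j) = (\<Sum>j\<in>UNIV-{i}. ws$j * f j)"
  by (rule sum.cong) auto

lemma key:
  fixes D :: "((real^'d) \<times> real) measure" and ws :: "real^'d"
  assumes sd: "slar_dist D \<mu>"
  shows "integrable D (\<lambda>p. (if 1 - snd p * (\<Sum>j\<in>UNIV-{i}. ws$j * fst p $ j) + K > 0 then 1 else 0)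
              * (\<mu>$i - snd p * fst p $ i))"
    "integral\<^sup>L D (\<lambda>p. (if 1 - snd p * (\<Sum>j\<in>UNIV-{i}. ws$j * fst p $ j) + K > 0 then 1 else 0)
              * (\<mu>$i - snd p * fst p $ i)) = 0"
proof -
  note B = slar_basic[OF sd]
  have [measurable]: "fst \<in> borel_measurable D" "snd \<in> borel_measurable D" using B by auto
  define G where "G y0 = (\<lambda>z::'d\<Rightarrow>real. if 1 - y0 * (\<Sum>j\<in>UNIV-{i}. ws$j * z j) + K > 0 then 1 else (0::real))" for y0
  have Gm: "G y0 \<in> borel_measurable (PiM (UNIV - {i}) (\<lambda>_. borel))" for y0
    unfolding G_def by measurable
  have Gb: "\<bar>G y0 z\<bar> \<le> 1" for y0 z by (simp add: G_def)
  note k1 = key_y0[OF sd _ Gm Gb, of 1] and k2 = key_y0[OF sd _ Gm Gb, of "-1"]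
  let ?F = "\<lambda>y0 p. G y0 (restrict (\<lambda>j. fst p $ j) (UNIV - {i})) * (\<mu>$i - y0 * fst p $ i)
            * indicator {q. snd q = y0} p"
  let ?L = "\<lambda>p. (if 1 - snd p * (\<Sum>j\<in>UNIV-{i}. ws$j * fst p $ j) + K > 0 then 1 else 0)
              * (\<mu>$i - snd p * fst p $ i)"
  have ae: "AE p in D. ?L p = ?F 1 p + ?F (-1) p"
    using B(3) by eventually_elim (auto simp: G_def restr_sum)
  have i12: "integrable D (\<lambda>p. ?F 1 p + ?F (-1) p)"
    using k1 k2 by (intro Bochner_Integration.integrable_add) auto
  have mL: "?L \<in> borel_measurable D" by measurable
  show "integrable D ?L"
  proof -
    have ae': "AE p in D. ?F 1 p + ?F (-1) p = ?L p" using ae by eventually_elim simp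
    show ?thesis by (rule integrable_cong_AE_imp[OF i12 mL ae'])
  qed
  have "integral\<^sup>L D ?L = integral\<^sup>L D (\<lambda>p. ?F 1 p + ?F (-1) p)"
    using ae by (intro integral_cong_AE mL) (use i12 in auto)
  also have "\<dots> = 0" using k1 k2 by (subst Bochner_Integration.integral_add) auto
  finally show "integral\<^sup>L D ?L = 0" .
qed

definition L1 :: "real^'d \<Rightarrow> real" where "L1 w = (\<Sum>j\<in>UNIV. \<bar>w$j\<bar>)"

lemma L1_nonneg: "0 \<le> L1 w" unfolding L1_def by (intro sum_nonneg) auto

definition dA :: "real \<Rightarrow> real^'d \<Rightarrow> (real^'d) \<times> real \<Rightarrow> real^'d" where
  "dA \<epsilon> w p = (- (if snd p \<ge> 0 then 1 else -1) * \<epsilon>) *\<^sub>R (\<chi> j. sgn (w$j))"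

lemma dA_pert:
  fixes D :: "((real^'d) \<times> real) measure"
  assumes sd: "slar_dist D \<mu>" and e: "\<epsilon> > 0"
  shows "perturbation D \<epsilon> (dA \<epsilon> w)"
proof -
  note B = slar_basic[OF sd]
  have [measurable]: "snd \<in> borel_measurable D" using B by auto
  have "dA \<epsilon> w \<in> borel_measurable D" unfolding dA_def by measurable
  moreover have "\<bar>dA \<epsilon> w p $ i\<bar> \<le> \<epsilon>" for p i
    using e by (auto simp: dA_def abs_mult sgn_if)
  ultimately show ?thesis unfolding perturbation_def by auto
qed

lemma inner_sgn: "w \<bullet> (\<chi> j. sgn (w$j)) = L1 w"
  unfolding inner_vec_def L1_def by (intro sum.cong) (auto simp: sgn_if)

lemma dA_val:
  assumes "snd p = 1 \<or> snd p = -1"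
  shows "snd p * (w \<bullet> (fst p + dA \<epsilon> w p)) = snd p * (w \<bullet> fst p) - \<epsilon> * L1 w"
  using assms by (auto simp: dA_def inner_add_right inner_sgn algebra_simps)

lemma pert_val:
  assumes "snd p = 1 \<or> snd p = -1" and "\<forall>j. \<bar>\<delta> p $ j\<bar> \<le> \<epsilon>"
  shows "max 0 (1 - snd p * (w \<bullet> (fst p + \<delta> p))) \<le> max 0 (1 - snd p * (w \<bullet> fst p) + \<epsilon> * L1 w)"
proof -
  have "\<bar>w \<bullet> \<delta> p\<bar> = \<bar>\<Sum>j\<in>UNIV. w $ j * \<delta> p $ j\<bar>" by (simp add: inner_vec_def)
  also have "\<dots> \<le> (\<Sum>j\<in>UNIV. \<bar>w $ j * \<delta> p $ j\<bar>)" by (rule sum_abs)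
  also have "\<dots> \<le> (\<Sum>j\<in>UNIV. \<bar>w $ j\<bar> * \<epsilon>)"
    by (rule sum_mono) (use assms(2) in \<open>auto simp: abs_mult intro: mult_left_mono\<close>)
  also have "\<dots> = \<epsilon> * L1 w" by (simp add: L1_def sum_distrib_left mult.commute)
  finally have "\<bar>w \<bullet> \<delta> p\<bar> \<le> \<epsilon> * L1 w" .
  then have "- (snd p * (w \<bullet> \<delta> p)) \<le> \<epsilon> * L1 w" using assms(1) by auto
  then show ?thesis by (auto simp: inner_add_right algebra_simps)
qed

lemma HL_int:
  fixes D :: "((real^'d) \<times> real) measure"
  assumes sd: "slar_dist D \<mu>" and e: "\<epsilon> > 0"
  shows "integrable D (\<lambda>p. max 0 (1 - snd p * (w \<bullet> fst p) + \<epsilon> * L1 w))"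
    "integral\<^sup>L D (\<lambda>p. max 0 (1 - snd p * (w \<bullet> (fst p + dA \<epsilon> w p))))
      = integral\<^sup>L D (\<lambda>p. max 0 (1 - snd p * (w \<bullet> fst p) + \<epsilon> * L1 w))"
proof -
  note B = slar_basic[OF sd]
  have [measurable]: "fst \<in> borel_measurable D" "snd \<in> borel_measurable D" using B by auto
  have [measurable]: "dA \<epsilon> w \<in> borel_measurable D" using dA_pert[OF sd e] by (auto simp: perturbation_def)
  have ae: "AE p in D. max 0 (1 - snd p * (w \<bullet> (fst p + dA \<epsilon> w p))) = max 0 (1 - snd p * (w \<bullet> fst p) + \<epsilon> * L1 w)"
    using B(3) by eventually_elim (simp add: dA_val)
  show "integrable D (\<lambda>p. max 0 (1 - snd p * (w \<bullet> fst p) + \<epsilon> * L1 w))"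
    by (rule integrable_cong_AE_imp[OF hinge_int[OF sd dA_pert[OF sd e] e] _ ae]) measurable
  show "integral\<^sup>L D (\<lambda>p. max 0 (1 - snd p * (w \<bullet> (fst p + dA \<epsilon> w p))))
      = integral\<^sup>L D (\<lambda>p. max 0 (1 - snd p * (w \<bullet> fst p) + \<epsilon> * L1 w))"
    by (rule integral_cong_AE[OF _ _ ae]) measurable
qed

lemma pert_le:
  fixes D :: "((real^'d) \<times> real) measure"
  assumes sd: "slar_dist D \<mu>" and e: "\<epsilon> > 0" and pd: "perturbation D \<epsilon> \<delta>"
  shows "integral\<^sup>L D (\<lambda>p. max 0 (1 - snd p * (w \<bullet> (fst p + \<delta> p))))
      \<le> integral\<^sup>L D (\<lambda>p. max 0 (1 - snd p * (w \<bullet> fst p) + \<epsilon> * L1 w))"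
proof (rule integral_mono_AE[OF hinge_int[OF sd pd e] HL_int(1)[OF sd e]])
  note B = slar_basic[OF sd]
  have bd: "\<forall>j. \<bar>\<delta> p $ j\<bar> \<le> \<epsilon>" for p using pd by (cases p) (auto simp: perturbation_def)
  show "AE p in D. max 0 (1 - snd p * (w \<bullet> (fst p + \<delta> p))) \<le> max 0 (1 - snd p * (w \<bullet> fst p) + \<epsilon> * L1 w)"
    using B(3) by eventually_elim (rule pert_val, assumption, rule bd)
qed

lemma sum_remove_i: "(\<Sum>j\<in>UNIV. f j) = f i + (\<Sum>j\<in>UNIV-{i}. f j)" for f :: "'d::finite \<Rightarrow> real"
  by (simp add: sum.remove)

lemma stepC:
  fixes D :: "((real^'d) \<times> real) measure" and ws :: "real^'d"
  assumes sd: "slar_dist D \<mu>" and e: "\<epsilon> > 0" and mu: "\<bar>\<mu>$i\<bar> \<le> \<epsilon>"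
  shows "integral\<^sup>L D (\<lambda>p. max 0 (1 - snd p * ((\<chi> j. if j = i then 0 else ws$j) \<bullet> fst p) + \<epsilon> * L1 (\<chi> j. if j = i then 0 else ws$j)))
       \<le> integral\<^sup>L D (\<lambda>p. max 0 (1 - snd p * (ws \<bullet> fst p) + \<epsilon> * L1 ws))"
proof -
  define w' where "w' = (\<chi> j. if j = i then 0 else ws$j)"
  define t where "t = ws$i"
  have iw': "w' \<bullet> x = (\<Sum>j\<in>UNIV-{i}. ws$j * x$j)" for x
    unfolding inner_vec_def w'_def by (subst sum_remove_i[of _ i]) (auto intro!: sum.cong)
  have iws: "ws \<bullet> x = w' \<bullet> x + t * x$i" for x
    unfolding iw' unfolding inner_vec_def t_def by (subst sum_remove_i[of _ i]) simp
  have Lws: "L1 ws = L1 w' + \<bar>t\<bar>"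
    unfolding L1_def w'_def t_def by (subst (1 2) sum_remove_i[of _ i]) (auto intro!: sum.cong)
  define c where "c = \<epsilon> * \<bar>t\<bar> - t * \<mu>$i"
  have "t * \<mu>$i \<le> \<bar>t\<bar> * \<epsilon>"
    using mu by (metis abs_ge_self abs_mult abs_ge_zero mult_left_mono order_trans)
  then have c0: "c \<ge> 0" unfolding c_def by (simp add: mult.commute)
  define K where "K = \<epsilon> * L1 w' + c"
  let ?Lk = "\<lambda>p. (if 1 - snd p * (\<Sum>j\<in>UNIV-{i}. ws$j * fst p $ j) + K > 0 then 1 else 0)
              * (\<mu>$i - snd p * fst p $ i)"
  note k = key[OF sd, where i=i and ws=ws and K=K]
  have pw: "max 0 (1 - snd p * (w' \<bullet> fst p) + \<epsilon> * L1 w') + t * ?Lk p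
        \<le> max 0 (1 - snd p * (ws \<bullet> fst p) + \<epsilon> * L1 ws)" for p
  proof -
    define A where "A = 1 - snd p * (w' \<bullet> fst p) + \<epsilon> * L1 w'"
    define d where "d = \<mu>$i - snd p * fst p $ i"
    have e1: "1 - snd p * (ws \<bullet> fst p) + \<epsilon> * L1 ws = A + c + t * d"
      unfolding A_def d_def c_def iws Lws by (simp add: algebra_simps)
    have e2: "1 - snd p * (\<Sum>j\<in>UNIV-{i}. ws$j * fst p $ j) + K = A + c"
      unfolding A_def K_def iw' by simp
    show ?thesis unfolding e1 e2 A_def[symmetric] d_def[symmetric] using c0 by auto
  qed
  have "integral\<^sup>L D (\<lambda>p. max 0 (1 - snd p * (w' \<bullet> fst p) + \<epsilon> * L1 w'))
      = integral\<^sup>L D (\<lambda>p. max 0 (1 - snd p * (w' \<bullet> fst p) + \<epsilon> * L1 w') + t * ?Lk p)"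
    using HL_int(1)[OF sd e, of w'] k by (simp add: Bochner_Integration.integral_add)
  also have "\<dots> \<le> integral\<^sup>L D (\<lambda>p. max 0 (1 - snd p * (ws \<bullet> fst p) + \<epsilon> * L1 ws))"
    by (rule integral_mono[OF _ HL_int(1)[OF sd e] pw])
       (use HL_int(1)[OF sd e, of w'] k in \<open>intro Bochner_Integration.integrable_add Bochner_Integration.integrable_mult_right; simp\<close>)
  finally show ?thesis unfolding w'_def .
qed

theorem mainTheorem14:
  fixes D :: "((real^'d) \<times> real) measure" and \<mu> :: "real^'d"
    and lam \<epsilon> :: real and \<delta>s :: "(real^'d) \<times> real \<Rightarrow> real^'d" and ws :: "real^'d"
  assumes "slar_dist D \<mu>" and "lam > 0" and "\<epsilon> > 0"
    and "slar_nash D lam \<epsilon> \<delta>s ws"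
  shows "\<forall>i. \<bar>\<mu> $ i\<bar> \<le> \<epsilon> \<longrightarrow> ws $ i = 0"
proof (intro allI impI)
  fix i assume mu: "\<bar>\<mu> $ i\<bar> \<le> \<epsilon>"
  note sd = assms(1) and e = assms(3)
  have pd: "perturbation D \<epsilon> \<delta>s"
    and br: "\<And>\<delta>. perturbation D \<epsilon> \<delta> \<Longrightarrow> slar_U D lam \<delta> ws \<le> slar_U D lam \<delta>s ws"
    and dr: "\<And>w. slar_U D lam \<delta>s ws \<le> slar_U D lam \<delta>s w"
    using assms(4) unfolding slar_nash_def by auto
  define w' where "w' = (\<chi> j. if j = i then 0 else ws$j)"
  define t where "t = ws$i"
  define HL where "HL w = integral\<^sup>L D (\<lambda>p. max 0 (1 - snd p * (w \<bullet> fst p) + \<epsilon> * L1 w))" for w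
  have 1: "slar_U D lam (dA \<epsilon> ws) ws = HL ws + lam / 2 * (norm ws)\<^sup>2"
    unfolding slar_U_def HL_def HL_int(2)[OF sd e] ..
  have 2: "slar_U D lam \<delta>s w' \<le> HL w' + lam / 2 * (norm w')\<^sup>2"
    unfolding slar_U_def HL_def using pert_le[OF sd e pd, of w'] by simp
  have 3: "HL w' \<le> HL ws" unfolding HL_def w'_def by (rule stepC[OF sd e mu])
  have nrm: "(norm ws)\<^sup>2 = (norm w')\<^sup>2 + t\<^sup>2"
    unfolding power2_norm_eq_inner inner_vec_def w'_def t_def
    by (subst (1 2) sum_remove_i[of _ i]) (auto intro!: sum.cong simp: power2_eq_square)
  have "HL ws + lam / 2 * (norm ws)\<^sup>2 \<le> HL w' + lam / 2 * (norm w')\<^sup>2"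
    using br[OF dA_pert[OF sd e, of ws]] dr[of w'] 1 2 by linarith
  then have "lam / 2 * t\<^sup>2 \<le> 0" using 3 unfolding nrm by (simp add: algebra_simps)
  then have "t\<^sup>2 \<le> 0" using assms(2) by (simp add: mult_le_0_iff)
  then show "ws $ i = 0" unfolding t_def by simp
qed


end
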